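(* Let $p>3$ be a prime, and set $A_p=\left(\tfrac{p-1}{2}\right)!!\prod_{i,j=1,\ p\nmid 2i+j}^{(p-1)/2}(2i+j)$ and $B_p=\left(\tfrac{p-3}{2}\right)!!\prod_{i,j=1,\ p\nmid 2i-j}^{(p-1)/2}(2i-j)$. Then $A_pB_p\equiv\left(\frac{-2}{p}\right)\pmod p$.
   Context: For a positive integer $n$, $n!!=\prod_{k=0}^{\lfloor(n-1)/2\rfloor}(n-2k)$, and $0!!=1$. $\left(\frac{\cdot}{p}\right)$ denotes the Legendre symbol. *)

theory Defs
  imports "HOL-Number_Theory.Number_Theory"
begin

definition dfact :: "nat \<Rightarrow> nat" where
  "dfact n = (if n = 0 then 1 else (\<Prod>k\<in>{0..(n - 1) div 2}. n - 2 * k))"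

end

theory Submission
  imports Defs
begin

lemma dfact_SS: "dfact (Suc (Suc m)) = (m+2) * dfact m"
proof (cases m)
  case 0 then show ?thesis by (simp add: dfact_def)
next
  case (Suc k)
  have e: "(Suc (Suc m) - 1) div 2 = Suc ((m - 1) div 2)" using Suc by simp
  have "dfact (Suc (Suc m)) = (\<Prod>k\<in>{0..Suc ((m - 1) div 2)}. Suc (Suc m) - 2 * k)"
    unfolding dfact_def e by simp
  also have "\<dots> = (m+2) * (\<Prod>k\<in>{0..(m - 1) div 2}. m - 2 * k)"
    by (subst prod.atLeast0_atMost_Suc_shift) simp
  also have "\<dots> = (m+2) * dfact m" using Suc by (simp add: dfact_def)
  finally show ?thesis .
qed

lemma dfact_fact: "dfact (Suc m) * dfact m = fact (Suc m)"
proof (induction m)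
  case 0 then show ?case by (simp add: dfact_def)
next
  case (Suc m)
  have "dfact (Suc (Suc m)) * dfact (Suc m) = (m+2) * (dfact (Suc m) * dfact m)"
    by (simp add: dfact_SS algebra_simps)
  also have "\<dots> = (m+2) * fact (Suc m)" using Suc by simp
  also have "\<dots> = fact (Suc (Suc m))" by (simp add: algebra_simps)
  finally show ?case .
qed

lemma pair_prod:
  fixes g :: "int \<Rightarrow> int \<Rightarrow> int"
  assumes "finite I" "finite J"
  shows "(\<Prod>(i, j) \<in> {(i, j). i \<in> I \<and> j \<in> J \<and> P i j}. g i j)
       = (\<Prod>i\<in>I. \<Prod>j\<in>J. if P i j then g i j else 1)"
proof -
  have "{(i, j). i \<in> I \<and> j \<in> J \<and> P i j} = {x \<in> I \<times> J. P (fst x) (snd x)}" by auto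
  then have "(\<Prod>(i, j) \<in> {(i, j). i \<in> I \<and> j \<in> J \<and> P i j}. g i j)
     = (\<Prod>x\<in>I \<times> J. if P (fst x) (snd x) then (case x of (i,j) \<Rightarrow> g i j) else 1)"
    using assms by (simp add: prod.inter_filter)
  also have "\<dots> = (\<Prod>(i,j)\<in>I \<times> J. if P i j then g i j else 1)"
    by (rule prod.cong) auto
  also have "\<dots> = (\<Prod>i\<in>I. \<Prod>j\<in>J. if P i j then g i j else 1)"
    by (simp add: prod.cartesian_product)
  finally show ?thesis .
qed

lemma split_prod:
  fixes g :: "int \<Rightarrow> int"
  shows "(\<Prod>x\<in>{a - int n..a + int n}. g x) = g a * (\<Prod>j\<in>{1..int n}. g (a+j)) * (\<Prod>j\<in>{1..int n}. g (a-j))"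
proof (induction n)
  case 0 then show ?case by simp
next
  case (Suc n)
  have s1: "{a - int (Suc n)..a + int (Suc n)} = insert (a - int n - 1) (insert (a + int n + 1) {a - int n..a + int n})"
    by auto
  have s2: "{1..int (Suc n)} = insert (int n + 1) {1..int n}" by auto
  show ?case unfolding s1 s2 using Suc by (simp add: algebra_simps)
qed

lemma prod_2i: "(\<Prod>i\<in>{1..int n}. 2*i) = 2^n * int (fact n)"
proof (induction n)
  case 0 then show ?case by simp
next
  case (Suc n)
  have s2: "{1..int (Suc n)} = insert (int n + 1) {1..int n}" by auto
  show ?case unfolding s2 using Suc by (simp add: algebra_simps)
qed

lemma fact_int_prod: "int (fact n) = (\<Prod>i\<in>{1..int n}. i)"
proof (induction n)
  case 0 then show ?case by simp
next
  case (Suc n)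
  have s2: "{1..int (Suc n)} = insert (int n + 1) {1..int n}" by auto
  show ?case unfolding s2 using Suc by (simp add: algebra_simps of_nat_mult)
qed

lemma bij_mod:
  fixes P :: int assumes "P > 0"
  shows "bij_betw (\<lambda>x. x mod P) {a..a+P-1} {0..P-1}"
proof (rule bij_betw_imageI)
  show "inj_on (\<lambda>x. x mod P) {a..a+P-1}"
  proof (rule inj_onI)
    fix x y assume x: "x \<in> {a..a+P-1}" and y: "y \<in> {a..a+P-1}" and e: "x mod P = y mod P"
    then have "P dvd (x - y)" by (simp add: mod_eq_dvd_iff)
    then obtain k where k: "x - y = P * k" by auto
    have "\<bar>x - y\<bar> < P" using x y by auto
    then have "P * \<bar>k\<bar> < P * 1" using k assms by (simp add: abs_mult)
    then have "\<bar>k\<bar> < 1" using assms by (simp only: mult_less_cancel_left_pos)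
    then have "k = 0" by simp
    then show "x = y" using k by simp
  qed
  show "(\<lambda>x. x mod P) ` {a..a+P-1} = {0..P-1}"
  proof
    show "(\<lambda>x. x mod P) ` {a..a+P-1} \<subseteq> {0..P-1}" using assms by auto
    show "{0..P-1} \<subseteq> (\<lambda>x. x mod P) ` {a..a+P-1}"
    proof
      fix y assume y: "y \<in> {0..P-1}"
      define x where "x = a + (y - a) mod P"
      have "0 \<le> (y - a) mod P" "(y - a) mod P < P" using assms by auto
      then have "x \<in> {a..a+P-1}" unfolding x_def by simp
      moreover have "x mod P = (a + (y - a)) mod P" unfolding x_def by (rule mod_add_right_eq)
      then have "x mod P = y" using y by simp
      ultimately show "y \<in> (\<lambda>x. x mod P) ` {a..a+P-1}" by (metis image_eqI)
    qed
  qed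
qed

lemma wilson_interval:
  fixes p :: nat assumes "prime p"
  shows "[(\<Prod>x\<in>{a..a+int p-1}. (if int p dvd x then 1 else x)) = -1] (mod int p)"
proof -
  define h where "h x = (if int p dvd x then 1 else x)" for x :: int
  have p0: "int p > 0" using assms prime_gt_0_nat by auto
  have "[(\<Prod>x\<in>{a..a+int p-1}. h x) = (\<Prod>x\<in>{a..a+int p-1}. h (x mod int p))] (mod int p)"
  proof (rule cong_prod)
    fix x
    show "[h x = h (x mod int p)] (mod int p)"
      unfolding h_def by (auto simp: cong_def dvd_eq_mod_eq_0)
  qed
  also have "(\<Prod>x\<in>{a..a+int p-1}. h (x mod int p)) = (\<Prod>y\<in>{0..int p-1}. h y)"
    using prod.reindex_bij_betw[OF bij_mod[OF p0, of a], of h] by simp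
  also have "{0..int p-1} = insert 0 {1..int p - 1}" using p0 by auto
  also have "(\<Prod>y\<in>insert 0 {1..int p - 1}. h y) = (\<Prod>y\<in>{1..int p - 1}. h y)"
    by (simp add: h_def)
  also have "\<dots> = (\<Prod>y\<in>{1..int p - 1}. y)"
    by (rule prod.cong) (auto simp: h_def zdvd_not_zless)
  also have "\<dots> = int (fact (p - 1))"
    using fact_int_prod[of "p - 1"] p0 by (simp add: of_nat_diff)
  also have "[int (fact (p - 1)) = -1] (mod int p)"
    using wilson_theorem[OF assms] by (simp add: of_nat_fact)
  finally show ?thesis unfolding h_def .
qed

theorem mainTheorem11:
  fixes p :: nat
  assumes "prime p" and "p > 3"
  defines "A \<equiv> int (dfact ((p - 1) div 2)) *
      (\<Prod>(i, j) \<in> {(i, j). i \<in> {1..int ((p - 1) div 2)} \<and> j \<in> {1..int ((p - 1) div 2)}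
                         \<and> \<not> int p dvd (2 * i + j)}. 2 * i + j)"
      and "B \<equiv> int (dfact ((p - 3) div 2)) *
      (\<Prod>(i, j) \<in> {(i, j). i \<in> {1..int ((p - 1) div 2)} \<and> j \<in> {1..int ((p - 1) div 2)}
                         \<and> \<not> int p dvd (2 * i - j)}. 2 * i - j)"
  shows "[A * B = Legendre (-2) (int p)] (mod int p)"
proof -
  define n where "n = (p - 1) div 2"
  define I where "I = {1..int n}"
  define F where "F x = (if int p dvd x then 1 else x)" for x :: int
  have oddp: "odd p" using assms(1,2) prime_odd_nat by auto
  then have pn: "p = 2 * n + 1" unfolding n_def by presburger
  have n2: "n \<ge> 2" using assms(2) pn by simp
  have n3: "(p - 3) div 2 = n - 1" using pn by simp
  have finI: "finite I" unfolding I_def by simp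
  have A': "A = int (dfact n) * (\<Prod>i\<in>I. \<Prod>j\<in>I. F (2*i+j))"
  proof -
    have "A = int (dfact n) * (\<Prod>i\<in>I. \<Prod>j\<in>I. if \<not> int p dvd (2*i+j) then 2*i+j else 1)"
      unfolding A_def n_def[symmetric] I_def[symmetric]
      using pair_prod[OF finI finI, where P="\<lambda>i j. \<not> int p dvd (2*i+j)" and g="\<lambda>i j. 2*i+j"] by simp
    then show ?thesis unfolding F_def by (auto intro!: prod.cong arg_cong2[where f="(*)"])
  qed
  have B': "B = int (dfact (n - 1)) * (\<Prod>i\<in>I. \<Prod>j\<in>I. F (2*i-j))"
  proof -
    have "B = int (dfact (n-1)) * (\<Prod>i\<in>I. \<Prod>j\<in>I. if \<not> int p dvd (2*i-j) then 2*i-j else 1)"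
      unfolding B_def n3 n_def[symmetric] I_def[symmetric]
      using pair_prod[OF finI finI, where P="\<lambda>i j. \<not> int p dvd (2*i-j)" and g="\<lambda>i j. 2*i-j"] by simp
    then show ?thesis unfolding F_def by (auto intro!: prod.cong arg_cong2[where f="(*)"])
  qed
  define Q where "Q i = (\<Prod>j\<in>I. F (2*i+j)) * (\<Prod>j\<in>I. F (2*i-j))" for i
  have df: "int (dfact n) * int (dfact (n - 1)) = int (fact n)"
  proof -
    have "dfact (Suc (n-1)) * dfact (n-1) = fact (Suc (n-1))" by (rule dfact_fact)
    then show ?thesis using n2 by (simp flip: of_nat_mult)
  qed
  have AB: "A * B = int (fact n) * (\<Prod>i\<in>I. Q i)"
    unfolding A' B' Q_def prod.distrib df[symmetric] by (simp add: algebra_simps)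
  have Qi: "[2 * i * Q i = -1] (mod int p)" if "i \<in> I" for i
  proof -
    have i: "1 \<le> i" "i \<le> int n" using that unfolding I_def by auto
    have "0 < 2*i" "2*i < int p" using i pn by auto
    then have nd: "\<not> int p dvd 2 * i" by (simp add: zdvd_not_zless)
    have "(\<Prod>x\<in>{2*i - int n..2*i + int n}. F x) = F (2*i) * Q i"
      unfolding Q_def I_def by (simp add: split_prod mult.assoc)
    also have "F (2*i) = 2 * i" using nd unfolding F_def by simp
    finally have e: "(\<Prod>x\<in>{2*i - int n..2*i + int n}. F x) = 2 * i * Q i" .
    have ee: "2*i - int n + int p - 1 = 2*i + int n" using pn by simp
    show ?thesis using wilson_interval[OF assms(1), of "2*i - int n", unfolded ee] e
      unfolding F_def by simp
  qed
  have "[(\<Prod>i\<in>I. 2 * i * Q i) = (\<Prod>i\<in>I. -1)] (mod int p)"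
    by (rule cong_prod) (rule Qi)
  moreover have "(\<Prod>i\<in>I. 2 * i * Q i) = 2^n * (A * B)"
    unfolding AB prod.distrib I_def prod_2i using fact_int_prod[of n] by simp
  moreover have "(\<Prod>i\<in>I. (-1::int)) = (-1)^n" unfolding I_def by simp
  ultimately have k: "[2^n * (A * B) = (-1)^n] (mod int p)" by simp
  define L where "L = Legendre (-2) (int p)"
  have eu: "[L = (-2)^n] (mod int p)"
    unfolding L_def n_def using euler_criterion[OF assms(1)] assms(2) by simp
  have nz: "\<not> [-2 = 0] (mod int p)"
  proof
    assume "[-2 = 0] (mod int p)"
    then have "int p dvd 2" by (simp add: cong_0_iff)
    then have "int p \<le> 2" using zdvd_imp_le[of "int p" 2] by simp
    then show False using assms(2) by simp
  qed
  have LL: "L * L = 1" unfolding L_def Legendre_def using nz by auto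
  have "[L * (A * B) = (-2)^n * (A * B)] (mod int p)" using eu by (simp add: cong_mult)
  moreover have "(-2::int)^n * (A * B) = (-1)^n * (2^n * (A * B))"
    by (simp add: power_mult_distrib[symmetric])
  moreover have "[(-1)^n * (2^n * (A * B)) = (-1::int)^n * (-1)^n] (mod int p)"
    using cong_mult[OF cong_refl[of "(-1::int)^n"] k] .
  moreover have "(-1::int)^n * (-1)^n = 1" by (simp flip: power_add)
  ultimately have "[L * (A * B) = 1] (mod int p)" by (metis cong_trans)
  then have "[L * (L * (A * B)) = L * 1] (mod int p)" using cong_mult[OF cong_refl[of L]] by blast
  then show ?thesis using LL unfolding L_def by (simp add: mult.assoc[symmetric])
qed

end
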